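(* Let $R>0$ and $\Theta=(\alpha,\rho_r,\rho_d,\rho_s,\rho_0,T)$ with $\alpha>1$, $\rho_r,\rho_d,\rho_s,\rho_0>0$, $T>1$, and with $\beta=\rho_d/\rho_r$, $\delta=\rho_s/\rho_r$, $\mu=\rho_0/\rho_r$ suppose $\min\big(\frac T4,\frac1{3\mu},\frac{3\beta}{2\mu}\big)>10$ and $\rho_r>\frac{\alpha}{2\delta}$. Then $$\frac38\,\zeta'_{csi}\Big(\frac43R,\Theta\Big)<\zeta'_{zf}(R,\Theta)<\zeta'_{csi}(R,\Theta).$$
   Context: $K_{max}(\Theta)=\min\big(\frac T4,\frac{\rho_r}{3\rho_0},\frac{3\rho_d}{2\rho_0}\big)$. For reals $M>K$, $1\le K\le\tau<T$ and rate $r>0$, let $$\gamma_u=\frac{K+\tau}{2\tau(M-K)}\Big(2^{\frac{r}{K(1-\tau/T)}}-1\Big)+\sqrt{\Big(\frac{K+\tau}{2\tau(M-K)}\Big(2^{\frac{r}{K(1-\tau/T)}}-1\Big)\Big)^2+\frac{2^{\frac{r}{K(1-\tau/T)}}-1}{\tau(M-K)}},$$ $$\frac{r}{\zeta_{zf}(M,K,\tau,r,\Theta)}=\alpha K\gamma_u+\rho_s+K\Big(\rho_d+\frac{8K^2\rho_0}{3T}\Big)+M\Big(\rho_r+2K\rho_0+\frac{4K^2\rho_0}{T}\Big).$$ $\zeta'_{zf}(r,\Theta)$ is the supremum of $\zeta_{zf}(M,K,\tau,r,\Theta)$ over real $(M,K,\tau)$ with $1\le K\le K_{max}(\Theta)$,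 $K\le\tau<T$, $M>K$. For real $M>K\ge1$, $\frac{1}{\zeta_{csi}(M,K,r,\Theta)}=\frac1r\big[\frac{\alpha K}{M-K}(2^{r/K}-1)+M\rho_r+K\rho_d+\rho_s\big]$, and $\zeta'_{csi}(r,\Theta)$ is the maximum of $\zeta_{csi}(M,K,r,\Theta)$ over real $(M,K)$ with $1\le K\le K_{max}(\Theta)$, $M>K$. *)

theory Defs
  imports Complex_Main
begin

definition Kmax :: "real \<Rightarrow> real \<Rightarrow> real \<Rightarrow> real \<Rightarrow> real \<Rightarrow> real \<Rightarrow> real" where
  "Kmax \<alpha> \<rho>r \<rho>d \<rho>s \<rho>0 T = min (T / 4) (min (\<rho>r / (3 * \<rho>0)) (3 * \<rho>d / (2 * \<rho>0)))"

definition gamma_u :: "real \<Rightarrow> real \<Rightarrow> real \<Rightarrow> real \<Rightarrow> real \<Rightarrow> real" where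
  "gamma_u M K \<tau> r T =
     (let e = 2 powr (r / (K * (1 - \<tau> / T))) - 1;
          a = (K + \<tau>) / (2 * \<tau> * (M - K)) * e
      in a + sqrt (a\<^sup>2 + e / (\<tau> * (M - K))))"

definition zeta_zf :: "real \<Rightarrow> real \<Rightarrow> real \<Rightarrow> real \<Rightarrow> real \<Rightarrow> real \<Rightarrow> real \<Rightarrow> real \<Rightarrow> real \<Rightarrow> real \<Rightarrow> real" where
  "zeta_zf M K \<tau> r \<alpha> \<rho>r \<rho>d \<rho>s \<rho>0 T =
     r / (\<alpha> * K * gamma_u M K \<tau> r T + \<rho>s + K * (\<rho>d + 8 * K\<^sup>2 * \<rho>0 / (3 * T))
          + M * (\<rho>r + 2 * K * \<rho>0 + 4 * K\<^sup>2 * \<rho>0 / T))"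

definition zeta'_zf :: "real \<Rightarrow> real \<Rightarrow> real \<Rightarrow> real \<Rightarrow> real \<Rightarrow> real \<Rightarrow> real \<Rightarrow> real" where
  "zeta'_zf r \<alpha> \<rho>r \<rho>d \<rho>s \<rho>0 T =
     Sup {zeta_zf M K \<tau> r \<alpha> \<rho>r \<rho>d \<rho>s \<rho>0 T | M K \<tau>.
            1 \<le> K \<and> K \<le> Kmax \<alpha> \<rho>r \<rho>d \<rho>s \<rho>0 T \<and> K \<le> \<tau> \<and> \<tau> < T \<and> M > K}"

definition zeta_csi :: "real \<Rightarrow> real \<Rightarrow> real \<Rightarrow> real \<Rightarrow> real \<Rightarrow> real \<Rightarrow> real \<Rightarrow> real \<Rightarrow> real \<Rightarrow> real" where
  "zeta_csi M K r \<alpha> \<rho>r \<rho>d \<rho>s \<rho>0 T =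
     1 / ((1 / r) * (\<alpha> * K / (M - K) * (2 powr (r / K) - 1) + M * \<rho>r + K * \<rho>d + \<rho>s))"

definition zeta'_csi :: "real \<Rightarrow> real \<Rightarrow> real \<Rightarrow> real \<Rightarrow> real \<Rightarrow> real \<Rightarrow> real \<Rightarrow> real" where
  "zeta'_csi r \<alpha> \<rho>r \<rho>d \<rho>s \<rho>0 T =
     Sup {zeta_csi M K r \<alpha> \<rho>r \<rho>d \<rho>s \<rho>0 T | M K.
            1 \<le> K \<and> K \<le> Kmax \<alpha> \<rho>r \<rho>d \<rho>s \<rho>0 T \<and> M > K}"

end

theory Submission
  imports Defs
begin


lemma sqrt_up:
  fixes a x :: real assumes "a > 0" "x \<ge> 0"
  shows "sqrt (a\<^sup>2 + x) \<le> a + x / (2*a)"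
proof -
  have "a\<^sup>2 + x \<le> (a + x/(2*a))\<^sup>2"
    using assms by (simp add: power2_eq_square field_simps)
  hence "sqrt (a\<^sup>2 + x) \<le> sqrt ((a + x/(2*a))\<^sup>2)" by (rule real_sqrt_le_mono)
  also have "\<dots> = a + x/(2*a)" using assms by simp
  finally show ?thesis .
qed

lemma sqrt_low:
  fixes a x :: real assumes "a \<ge> 0" "x \<ge> 0"
  shows "a \<le> sqrt (a\<^sup>2 + x)"
proof -
  have "sqrt (a\<^sup>2) \<le> sqrt (a\<^sup>2 + x)" using assms by (intro real_sqrt_le_mono) simp
  thus ?thesis using assms by simp
qed

lemma csi_eq: "r \<noteq> 0 \<Longrightarrow> zeta_csi M K r \<alpha> \<rho>r \<rho>d \<rho>s \<rho>0 T =
   r / (\<alpha> * K / (M - K) * (2 powr (r / K) - 1) + M * \<rho>r + K * \<rho>d + \<rho>s)"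
  unfolding zeta_csi_def by simp

lemma csi_bound:
  assumes "r > 0" "\<alpha> > 0" "\<rho>r > 0" "\<rho>d > 0" "\<rho>s > 0" "1 \<le> K" "K < M"
  shows "0 < zeta_csi M K r \<alpha> \<rho>r \<rho>d \<rho>s \<rho>0 T \<and> zeta_csi M K r \<alpha> \<rho>r \<rho>d \<rho>s \<rho>0 T \<le> r / \<rho>r"
proof -
  have e: "2 powr (r/K) - 1 > 0" using assms by simp
  have t: "\<alpha> * K / (M - K) * (2 powr (r / K) - 1) > 0" using assms e by simp
  define D where "D = \<alpha> * K / (M - K) * (2 powr (r / K) - 1) + M * \<rho>r + K * \<rho>d + \<rho>s"
  have D1: "D \<ge> \<rho>r" unfolding D_def using assms t
    by (smt (verit) mult_le_cancel_right1 mult_pos_pos)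
  have "zeta_csi M K r \<alpha> \<rho>r \<rho>d \<rho>s \<rho>0 T = r / D" using csi_eq[of r] assms D_def by simp
  moreover have "r / D \<le> r / \<rho>r" using D1 assms by (intro divide_left_mono) auto
  moreover have "r / D > 0" using D1 assms by simp
  ultimately show ?thesis by simp
qed


lemma zf_le_csi:
  assumes R: "R > 0" and pos: "\<alpha> > 0" "\<rho>r > 0" "\<rho>d > 0" "\<rho>s > 0" "\<rho>0 > 0"
    and "T > 1" "1 \<le> K" "K \<le> \<tau>" "\<tau> < T" "K < M"
  shows "zeta_zf M K \<tau> R \<alpha> \<rho>r \<rho>d \<rho>s \<rho>0 T * (1 + min (1/T) (2*\<rho>0/(\<rho>r+\<rho>d+\<rho>s)))
         \<le> zeta_csi M K R \<alpha> \<rho>r \<rho>d \<rho>s \<rho>0 T"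
proof -
  define \<eta> where "\<eta> = min (1/T) (2*\<rho>0/(\<rho>r+\<rho>d+\<rho>s))"
  define \<epsilon> where "\<epsilon> = 2*\<rho>0/(\<rho>r+\<rho>d+\<rho>s)"
  define e0 where "e0 = 2 powr (R/K) - 1"
  define e where "e = 2 powr (R / (K * (1 - \<tau> / T))) - 1"
  define a where "a = (K + \<tau>) / (2 * \<tau> * (M - K)) * e"
  define c0 where "c0 = e0 / (M - K)"
  have Tp: "T > 0" "\<tau> > 0" "M - K > 0" using assms by auto
  have e0p: "e0 > 0" unfolding e0_def using assms by simp
  have q: "0 < 1 - \<tau>/T" "1 - \<tau>/T \<le> 1" using assms Tp by (auto simp: field_simps)
  have "R / K \<le> R / (K * (1 - \<tau> / T))"
    using q assms by (intro divide_left_mono mult_pos_pos) (auto simp: mult_le_cancel_left1)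
  hence ee0: "e0 \<le> e" unfolding e0_def e_def by simp
  have ap: "a \<ge> 0" unfolding a_def using ee0 e0p Tp assms by simp
  have xp: "e / (\<tau> * (M - K)) \<ge> 0" using ee0 e0p Tp by simp
  have g: "gamma_u M K \<tau> R T = a + sqrt (a\<^sup>2 + e / (\<tau> * (M - K)))"
    unfolding gamma_u_def Let_def a_def e_def by simp
  have g2: "gamma_u M K \<tau> R T \<ge> 2 * a" using g sqrt_low[OF ap xp] by simp
  have a2: "2 * a = (1 + K/\<tau>) * e / (M - K)" unfolding a_def using Tp by (simp add: field_simps)
  have kt: "1 + K/\<tau> \<ge> 1 + 1/T" using assms Tp by (simp add: frac_le)
  have "(1 + 1/T) * e0 \<le> (1 + K/\<tau>) * e" using kt ee0 e0p Tp assms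
    by (intro mult_mono) auto
  hence "(1 + 1/T) * c0 \<le> 2 * a" unfolding a2 c0_def using Tp
    by (simp add: divide_right_mono)
  hence gc: "(1 + 1/T) * c0 \<le> gamma_u M K \<tau> R T" using g2 by simp
  have c0p: "c0 > 0" unfolding c0_def using e0p Tp by simp
  define rest where "rest = M * \<rho>r + K * \<rho>d + \<rho>s"
  define Dc where "Dc = \<alpha> * K * c0 + rest"
  define Dz where "Dz = \<alpha> * K * gamma_u M K \<tau> R T + \<rho>s + K * (\<rho>d + 8 * K\<^sup>2 * \<rho>0 / (3 * T))
          + M * (\<rho>r + 2 * K * \<rho>0 + 4 * K\<^sup>2 * \<rho>0 / T)"
  have restp: "rest > 0" unfolding rest_def using assms by (smt (verit) mult_pos_pos)
  have Dcp: "Dc > 0" unfolding Dc_def using restp c0p assms by (smt (verit) mult_pos_pos)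
  have csi: "zeta_csi M K R \<alpha> \<rho>r \<rho>d \<rho>s \<rho>0 T = R / Dc"
  proof -
    have "\<alpha> * K / (M - K) * (2 powr (R / K) - 1) = \<alpha> * K * c0" unfolding c0_def e0_def by simp
    thus ?thesis using csi_eq[of R M K] R unfolding Dc_def rest_def by simp
  qed
  have zf: "zeta_zf M K \<tau> R \<alpha> \<rho>r \<rho>d \<rho>s \<rho>0 T = R / Dz"
    unfolding zeta_zf_def Dz_def by simp
  have h1: "\<eta> * (\<alpha>*K*c0) \<le> (1/T) * (\<alpha>*K*c0)" unfolding \<eta>_def
    using c0p assms by (intro mult_right_mono) auto
  have h2: "\<eta> * rest \<le> \<epsilon> * rest" unfolding \<eta>_def \<epsilon>_def
    using restp by (intro mult_right_mono) auto
  have mk: "rest \<le> M * K * (\<rho>r+\<rho>d+\<rho>s)"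
  proof -
    have "M * \<rho>r \<le> M * K * \<rho>r" using assms by (simp add: mult_le_cancel_left1 mult_le_cancel_right1)
    moreover have "K * \<rho>d \<le> M * K * \<rho>d" using assms by (simp add: mult_le_cancel_right1)
    moreover have "\<rho>s \<le> M * K * \<rho>s" using assms
      by (smt (verit) mult_le_cancel_right1 mult_le_cancel_left1 mult_pos_pos)
    ultimately show ?thesis unfolding rest_def by (simp add: algebra_simps)
  qed
  have h3: "\<epsilon> * rest \<le> 2 * M * K * \<rho>0"
  proof -
    have "\<epsilon> * rest \<le> \<epsilon> * (M * K * (\<rho>r+\<rho>d+\<rho>s))" using mk assms unfolding \<epsilon>_def
      by (intro mult_left_mono) auto
    also have "\<dots> = 2 * M * K * \<rho>0" unfolding \<epsilon>_def using assms by (simp add: field_simps)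
    finally show ?thesis .
  qed
  have h4: "\<alpha>*K*((1 + 1/T) * c0) \<le> \<alpha>*K*gamma_u M K \<tau> R T" using gc assms
    by (intro mult_left_mono) auto
  have nn: "K * (8 * K\<^sup>2 * \<rho>0 / (3 * T)) \<ge> 0" "M * (4 * K\<^sup>2 * \<rho>0 / T) \<ge> 0" using assms Tp by auto
  have "(1 + \<eta>) * Dc \<le> Dz"
    using h1 h2 h3 h4 nn unfolding Dc_def Dz_def rest_def by (simp add: algebra_simps)
  have etap: "\<eta> > 0" unfolding \<eta>_def using assms by simp
  have Dzp: "Dz > 0" using \<open>(1 + \<eta>) * Dc \<le> Dz\<close> Dcp etap by (smt (verit) mult_pos_pos)
  have "R / Dz * (1 + \<eta>) = R / (Dz / (1+\<eta>))" using etap by simp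
  also have "\<dots> \<le> R / Dc" using \<open>(1 + \<eta>) * Dc \<le> Dz\<close> Dcp etap R Dzp
    by (intro divide_left_mono) (auto simp: field_simps)
  finally show ?thesis using csi zf \<eta>_def by simp
qed


lemma zf_ge_csi:
  assumes R: "R > 0" and pos: "\<alpha> > 0" "\<rho>r > 0" "\<rho>d > 0" "\<rho>s > 0" "\<rho>0 > 0"
    and "T > 1" "1 \<le> K" "K \<le> T/4" "3*K*\<rho>0 \<le> \<rho>r" "2*K*\<rho>0 \<le> 3*\<rho>d" "K < M"
    and Dc: "Dc = \<alpha> * K / (M - K) * (2 powr (4/3*R / K) - 1) + M * \<rho>r + K * \<rho>d + \<rho>s"
  shows "R / (2*Dc - (\<rho>s - \<alpha>/2)) \<le> zeta_zf M K (T/4) R \<alpha> \<rho>r \<rho>d \<rho>s \<rho>0 T"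
    and "zeta_csi M K (4/3*R) \<alpha> \<rho>r \<rho>d \<rho>s \<rho>0 T = 4/3*R / Dc"
    and "Dc > 0"
proof -
  define \<tau> where "\<tau> = T/4"
  define e where "e = 2 powr (4/3*R / K) - 1"
  define c where "c = e / (M - K)"
  define a where "a = (K + \<tau>) / (2 * \<tau> * (M - K)) * e"
  have Tp: "T > 0" "\<tau> > 0" "M - K > 0" "K \<le> \<tau>" "K > 0" using assms by (auto simp: \<tau>_def)
  have ep: "e > 0" unfolding e_def using assms by simp
  have cp: "c > 0" unfolding c_def using ep Tp by simp
  have ex: "R / (K * (1 - \<tau> / T)) = 4/3*R/K" unfolding \<tau>_def using Tp by (simp add: field_simps)
  have ap: "a > 0" unfolding a_def using ep Tp by simp
  have xp: "e / (\<tau> * (M - K)) \<ge> 0" using ep Tp by simp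
  have g: "gamma_u M K \<tau> R T = a + sqrt (a\<^sup>2 + e / (\<tau> * (M - K)))"
    unfolding gamma_u_def Let_def a_def e_def ex by simp
  have gu: "gamma_u M K \<tau> R T \<le> 2*a + (e / (\<tau> * (M - K))) / (2*a)"
    using g sqrt_up[OF ap xp] by simp
  have a2: "2*a = (1 + K/\<tau>) * c" unfolding a_def c_def using Tp by (simp add: field_simps)
  have a3: "(e / (\<tau> * (M - K))) / (2*a) = 1 / (K + \<tau>)"
  proof -
    have nz: "M - K \<noteq> 0" "K + \<tau> \<noteq> 0" "\<tau> \<noteq> 0" "e \<noteq> 0" using Tp ep by auto
    have "2*a = (K+\<tau>) * (e / (\<tau> * (M - K)))" unfolding a_def using nz by (simp add: field_simps)
    moreover have "e / (\<tau> * (M - K)) \<noteq> 0" using nz by simp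
    ultimately show ?thesis using nz by simp
  qed
  have kt: "K/\<tau> \<le> 1" using Tp by simp
  have kt2: "K/(K+\<tau>) \<le> 1/2" using Tp by (simp add: field_simps)
  have "\<alpha>*K*gamma_u M K \<tau> R T \<le> \<alpha>*K*((1 + K/\<tau>) * c + 1/(K+\<tau>))"
    using gu a2 a3 pos Tp by (intro mult_left_mono) auto
  also have "\<dots> = \<alpha>*K*c + \<alpha>*K*c*(K/\<tau>) + \<alpha>*(K/(K+\<tau>))" by (simp add: algebra_simps)
  also have "\<dots> \<le> \<alpha>*K*c + \<alpha>*K*c*1 + \<alpha>*(1/2)"
    using kt kt2 pos cp Tp by (intro add_mono mult_left_mono) auto
  finally have G: "\<alpha>*K*gamma_u M K \<tau> R T \<le> 2*(\<alpha>*K*c) + \<alpha>/2" by (simp add: algebra_simps)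
  have B1: "K * (\<rho>d + 8 * K\<^sup>2 * \<rho>0 / (3 * T)) \<le> 2 * K * \<rho>d"
  proof -
    have "8 * K\<^sup>2 * \<rho>0 / (3 * T) \<le> \<rho>d"
    proof -
      have "8 * K\<^sup>2 * \<rho>0 / (3 * T) = (8/3) * K * \<rho>0 * (K / T)" by (simp add: power2_eq_square)
      also have "\<dots> \<le> (8/3) * K * \<rho>0 * (1/4)" using assms Tp
        by (intro mult_left_mono) (auto simp: field_simps)
      finally have X: "8 * K\<^sup>2 * \<rho>0 / (3 * T) \<le> (8/3) * K * \<rho>0 * (1/4)" .
      show ?thesis using X assms by linarith
    qed
    hence "K * (\<rho>d + 8 * K\<^sup>2 * \<rho>0 / (3 * T)) \<le> K * (2 * \<rho>d)" using Tp
      by (intro mult_left_mono) auto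
    thus ?thesis by simp
  qed
  have B2: "M * (\<rho>r + 2 * K * \<rho>0 + 4 * K\<^sup>2 * \<rho>0 / T) \<le> 2 * M * \<rho>r"
  proof -
    have "4 * K\<^sup>2 * \<rho>0 / T \<le> K * \<rho>0"
    proof -
      have "4 * K\<^sup>2 * \<rho>0 / T = 4 * K * \<rho>0 * (K / T)" by (simp add: power2_eq_square)
      also have "\<dots> \<le> 4 * K * \<rho>0 * (1/4)" using assms Tp
        by (intro mult_left_mono) (auto simp: field_simps)
      finally show ?thesis by simp
    qed
    hence "\<rho>r + 2 * K * \<rho>0 + 4 * K\<^sup>2 * \<rho>0 / T \<le> 2 * \<rho>r" using assms by simp
    hence "M * (\<rho>r + 2 * K * \<rho>0 + 4 * K\<^sup>2 * \<rho>0 / T) \<le> M * (2 * \<rho>r)" using Tp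
      by (intro mult_left_mono) auto
    thus ?thesis by simp
  qed
  have ce: "\<alpha> * K / (M - K) * (2 powr (4/3*R / K) - 1) = \<alpha>*K*c" unfolding c_def e_def by simp
  define Dz where "Dz = \<alpha> * K * gamma_u M K \<tau> R T + \<rho>s + K * (\<rho>d + 8 * K\<^sup>2 * \<rho>0 / (3 * T))
          + M * (\<rho>r + 2 * K * \<rho>0 + 4 * K\<^sup>2 * \<rho>0 / T)"
  have Dzle: "Dz \<le> 2*Dc - (\<rho>s - \<alpha>/2)" unfolding Dz_def Dc ce using G B1 B2 by simp
  have gp: "gamma_u M K \<tau> R T > 0"
  proof -
    have "sqrt (a\<^sup>2 + e / (\<tau> * (M - K))) \<ge> 0" using xp by simp
    thus ?thesis using g ap by linarith
  qed
  have t1: "\<alpha> * K * gamma_u M K \<tau> R T > 0" using gp pos Tp by simp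
  have t2: "K * (\<rho>d + 8 * K\<^sup>2 * \<rho>0 / (3 * T)) > 0" using pos Tp by (simp add: add_pos_nonneg)
  have t3: "M * (\<rho>r + 2 * K * \<rho>0 + 4 * K\<^sup>2 * \<rho>0 / T) > 0" using pos Tp
    by (intro mult_pos_pos add_pos_nonneg) auto
  have Dzp: "Dz > 0" unfolding Dz_def using t1 t2 t3 pos by linarith
  have zf: "zeta_zf M K \<tau> R \<alpha> \<rho>r \<rho>d \<rho>s \<rho>0 T = R / Dz"
    unfolding zeta_zf_def Dz_def by simp
  show "R / (2*Dc - (\<rho>s - \<alpha>/2)) \<le> zeta_zf M K (T/4) R \<alpha> \<rho>r \<rho>d \<rho>s \<rho>0 T"
    using zf Dzle Dzp R unfolding \<tau>_def by (simp add: divide_left_mono)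
  show "Dc > 0"
  proof -
    have "\<alpha>*K*c > 0" "M * \<rho>r > 0" "K * \<rho>d > 0" using cp pos Tp by auto
    thus ?thesis unfolding Dc ce using pos by linarith
  qed
  show "zeta_csi M K (4/3*R) \<alpha> \<rho>r \<rho>d \<rho>s \<rho>0 T = 4/3*R / Dc"
    using csi_eq[of "4/3*R" M K] R Dc by simp
qed


theorem corollary1:
  fixes R \<alpha> \<rho>r \<rho>d \<rho>s \<rho>0 T :: real
  assumes "R > 0"
    and "\<alpha> > 1" and "\<rho>r > 0" and "\<rho>d > 0" and "\<rho>s > 0" and "\<rho>0 > 0" and "T > 1"
    and "min (T / 4) (min (1 / (3 * (\<rho>0 / \<rho>r))) (3 * (\<rho>d / \<rho>r) / (2 * (\<rho>0 / \<rho>r)))) > 10"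
    and "\<rho>r > \<alpha> / (2 * (\<rho>s / \<rho>r))"
  shows "3 / 8 * zeta'_csi (4 / 3 * R) \<alpha> \<rho>r \<rho>d \<rho>s \<rho>0 T < zeta'_zf R \<alpha> \<rho>r \<rho>d \<rho>s \<rho>0 T
       \<and> zeta'_zf R \<alpha> \<rho>r \<rho>d \<rho>s \<rho>0 T < zeta'_csi R \<alpha> \<rho>r \<rho>d \<rho>s \<rho>0 T"
proof -
  note A = assms
  have apos: "\<alpha> > 0" using A by simp
  define Km where "Km = Kmax \<alpha> \<rho>r \<rho>d \<rho>s \<rho>0 T"
  have e1: "1 / (3 * (\<rho>0 / \<rho>r)) = \<rho>r / (3 * \<rho>0)" using A by (simp add: field_simps)
  have e2: "3 * (\<rho>d / \<rho>r) / (2 * (\<rho>0 / \<rho>r)) = 3 * \<rho>d / (2 * \<rho>0)" using A by (simp add: field_simps)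
  have Km10: "Km > 10" using A(8) unfolding Km_def Kmax_def e1 e2 .
  have KmB: "K \<le> Km \<Longrightarrow> K \<le> T/4 \<and> 3*K*\<rho>0 \<le> \<rho>r \<and> 2*K*\<rho>0 \<le> 3*\<rho>d" for K
  proof -
    assume "K \<le> Km"
    hence "K \<le> T/4" "K \<le> \<rho>r / (3 * \<rho>0)" "K \<le> 3 * \<rho>d / (2 * \<rho>0)"
      unfolding Km_def Kmax_def by auto
    thus ?thesis using A by (simp add: field_simps)
  qed
  have rs: "\<alpha>/2 < \<rho>s"
  proof -
    have "\<alpha> / (2 * (\<rho>s / \<rho>r)) = \<rho>r * (\<alpha> / (2*\<rho>s))" using A by simp
    hence "\<rho>r * (\<alpha> / (2*\<rho>s)) < \<rho>r * 1" using A(9) by linarith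
    hence "\<alpha> / (2*\<rho>s) < 1" using A by (simp only: mult_less_cancel_left_pos)
    thus ?thesis using A by (simp add: field_simps)
  qed
  define Cs where "Cs r = {zeta_csi M K r \<alpha> \<rho>r \<rho>d \<rho>s \<rho>0 T | M K. 1 \<le> K \<and> K \<le> Km \<and> M > K}" for r
  define Z where "Z = {zeta_zf M K \<tau> R \<alpha> \<rho>r \<rho>d \<rho>s \<rho>0 T | M K \<tau>.
            1 \<le> K \<and> K \<le> Km \<and> K \<le> \<tau> \<and> \<tau> < T \<and> M > K}"
  have csiS: "zeta'_csi r \<alpha> \<rho>r \<rho>d \<rho>s \<rho>0 T = Sup (Cs r)" for r
    unfolding zeta'_csi_def Cs_def Km_def ..
  have zfS: "zeta'_zf R \<alpha> \<rho>r \<rho>d \<rho>s \<rho>0 T = Sup Z"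
    unfolding zeta'_zf_def Z_def Km_def ..
  have Csne: "zeta_csi 2 1 r \<alpha> \<rho>r \<rho>d \<rho>s \<rho>0 T \<in> Cs r" for r
    unfolding Cs_def using Km10 by fastforce
  have Csbdd: "bdd_above (Cs r)" if "r > 0" for r
  proof (rule bdd_aboveI)
    fix x assume "x \<in> Cs r"
    then obtain M K where "x = zeta_csi M K r \<alpha> \<rho>r \<rho>d \<rho>s \<rho>0 T" "1 \<le> K" "M > K"
      unfolding Cs_def by blast
    thus "x \<le> r / \<rho>r" using csi_bound[of r \<alpha> \<rho>r \<rho>d \<rho>s K M] that A apos by auto
  qed
  have Cspos: "Sup (Cs r) > 0" if "r > 0" for r
  proof -
    have "zeta_csi 2 1 r \<alpha> \<rho>r \<rho>d \<rho>s \<rho>0 T > 0" using csi_bound[of r \<alpha> \<rho>r \<rho>d \<rho>s 1 2] that A apos by auto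
    moreover have "zeta_csi 2 1 r \<alpha> \<rho>r \<rho>d \<rho>s \<rho>0 T \<le> Sup (Cs r)"
      using Csne Csbdd[OF that] by (rule cSup_upper)
    ultimately show ?thesis by simp
  qed
  define \<eta> where "\<eta> = min (1/T) (2*\<rho>0/(\<rho>r+\<rho>d+\<rho>s))"
  have etap: "\<eta> > 0" unfolding \<eta>_def using A by simp
  have Zle: "z \<le> Sup (Cs R) / (1 + \<eta>)" if "z \<in> Z" for z
  proof -
    obtain M K \<tau> where z: "z = zeta_zf M K \<tau> R \<alpha> \<rho>r \<rho>d \<rho>s \<rho>0 T" "1 \<le> K" "K \<le> Km" "K \<le> \<tau>" "\<tau> < T" "M > K"
      using \<open>z \<in> Z\<close> unfolding Z_def by blast
    have "z * (1 + \<eta>) \<le> zeta_csi M K R \<alpha> \<rho>r \<rho>d \<rho>s \<rho>0 T"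
      using zf_le_csi[of R \<alpha> \<rho>r \<rho>d \<rho>s \<rho>0 T K \<tau> M] z A apos unfolding \<eta>_def by auto
    also have "\<dots> \<le> Sup (Cs R)" using Csbdd[OF A(1)] z unfolding Cs_def
      by (intro cSup_upper) blast+
    finally show ?thesis using etap by (simp add: field_simps)
  qed
  have Zne: "zeta_zf 2 1 1 R \<alpha> \<rho>r \<rho>d \<rho>s \<rho>0 T \<in> Z" unfolding Z_def using Km10 A by fastforce
  have Zbdd: "bdd_above Z" using Zle by (intro bdd_aboveI) auto
  have upper: "Sup Z < Sup (Cs R)"
  proof -
    have "Sup Z \<le> Sup (Cs R) / (1 + \<eta>)" using Zne Zle by (intro cSup_least) auto
    also have "\<dots> < Sup (Cs R)" using Cspos[OF A(1)] etap by (simp add: field_simps)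
    finally show ?thesis .
  qed
  define S2 where "S2 = Sup (Cs (4/3*R))"
  have R43: "4/3*R > 0" using A by simp
  have S2p: "S2 > 0" unfolding S2_def using Cspos[OF R43] .
  define \<delta> where "\<delta> = \<rho>s - \<alpha>/2"
  have dp: "\<delta> > 0" unfolding \<delta>_def using rs by simp
  define v0 where "v0 = 1 / (1/S2 + 3*\<delta>/(8*R))"
  have q0: "1/S2 + 3*\<delta>/(8*R) > 1/S2" using dp A by simp
  have iS: "1/S2 > 0" using S2p by simp
  have "1/S2 + 3*\<delta>/(8*R) > 0" using q0 iS by linarith
  hence v0p: "v0 > 0" unfolding v0_def by simp
  have pp: "0 < (1/S2 + 3*\<delta>/(8*R)) * (1/S2)" using \<open>1/S2 + 3*\<delta>/(8*R) > 0\<close> iS by (rule mult_pos_pos)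
  have "1 / (1/S2 + 3*\<delta>/(8*R)) < 1 / (1/S2)"
    using q0 pp by (intro divide_strict_left_mono) auto
  hence "v0 < S2" unfolding v0_def by simp
  then obtain v where v: "v \<in> Cs (4/3*R)" "v0 < v"
    using less_cSup_iff[OF _ Csbdd[OF R43], of v0] Csne unfolding S2_def by blast
  then obtain M K where MK: "v = zeta_csi M K (4/3*R) \<alpha> \<rho>r \<rho>d \<rho>s \<rho>0 T" "1 \<le> K" "K \<le> Km" "M > K"
    unfolding Cs_def by blast
  define Dc where "Dc = \<alpha> * K / (M - K) * (2 powr (4/3*R / K) - 1) + M * \<rho>r + K * \<rho>d + \<rho>s"
  have KB: "K \<le> T/4" "3*K*\<rho>0 \<le> \<rho>r" "2*K*\<rho>0 \<le> 3*\<rho>d" using KmB[OF MK(3)] by auto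
  note L = zf_ge_csi[of R \<alpha> \<rho>r \<rho>d \<rho>s \<rho>0 T K M Dc, OF A(1) apos A(3-7) MK(2) KB MK(4) Dc_def]
  have zin: "zeta_zf M K (T/4) R \<alpha> \<rho>r \<rho>d \<rho>s \<rho>0 T \<in> Z"
  proof -
    have "1 \<le> K \<and> K \<le> Km \<and> K \<le> T/4 \<and> T/4 < T \<and> M > K" using MK KB A by auto
    thus ?thesis unfolding Z_def by blast
  qed
  have zle: "zeta_zf M K (T/4) R \<alpha> \<rho>r \<rho>d \<rho>s \<rho>0 T \<le> Sup Z" using zin Zbdd by (rule cSup_upper)
  have vD: "v = 4/3*R / Dc" using MK(1) L(2) by simp
  have Dcp: "Dc > 0" using L(3) .
  have "1 / v < 1 / v0" using v(2) v0p by (simp add: divide_strict_left_mono)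
  hence "3*Dc/(4*R) < 1/S2 + 3*\<delta>/(8*R)" unfolding vD v0_def using A Dcp by (simp add: field_simps)
  hence m: "(8*R/3) * (3*Dc/(4*R)) < (8*R/3) * (1/S2 + 3*\<delta>/(8*R))"
    using A by (intro mult_strict_left_mono) auto
  have m1: "(8*R/3) * (3*Dc/(4*R)) = 2*Dc" using A by (simp add: field_simps)
  have m2: "(8*R/3) * (1/S2 + 3*\<delta>/(8*R)) = 8*R/(3*S2) + \<delta>" using A S2p by (simp add: field_simps)
  have lt: "2*Dc - \<delta> < 8*R/(3*S2)" using m m1 m2 by linarith
  have dcs: "Dc \<ge> \<rho>s"
  proof -
    have "\<alpha> * K / (M - K) * (2 powr (4/3*R / K) - 1) > 0" using MK A apos by simp
    moreover have "M * \<rho>r > 0" "K * \<rho>d > 0" using MK A by auto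
    ultimately show ?thesis unfolding Dc_def by linarith
  qed
  have pos2: "2*Dc - \<delta> > 0" unfolding \<delta>_def using dcs apos A by linarith
  have "3/8 * S2 = R / (8*R/(3*S2))" using A S2p by (simp add: field_simps)
  have p8: "0 < 8*R/(3*S2)" using A S2p by simp
  have pq: "0 < (8*R/(3*S2)) * (2*Dc - \<delta>)" using p8 pos2 by (rule mult_pos_pos)
  have "3/8 * S2 = R / (8*R/(3*S2))" using A S2p by (simp add: field_simps)
  also have "\<dots> < R / (2*Dc - \<delta>)" using lt pq A by (intro divide_strict_left_mono) auto
  also have "\<dots> \<le> Sup Z" using L(1) zle unfolding \<delta>_def by linarith
  finally have lower: "3/8 * S2 < Sup Z" .
  show ?thesis using lower upper unfolding csiS zfS S2_def by simp
qed

end
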